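(* Let $\mu$ be a probability measure on $\mathbb{C}$, $\{a_n\}_{n\ge1}$ a $\mu$-distributed sequence of complex numbers, $\sigma_n\ge0$ real numbers with $\sigma_n\downarrow0$, and $X_1,X_2,\dots$ i.i.d. complex random variables. Then the sequence $\{a_n+\sigma_nX_n\}_{n\ge1}$ is $\mu$-distributed almost surely.
   Context: A sequence $\{a_n\}$ of complex numbers is $\mu$-distributed if $\frac1n\sum_{k=1}^n\delta_{a_k}$ converges weakly to $\mu$, i.e. $\frac1n\sum_{k=1}^n f(a_k)\to\int f\,d\mu$ for all $f\in C_c^\infty(\mathbb{C})$. *)

theory Defs
  imports "HOL-Probability.Probability"
begin

text \<open>C-infinity on C viewed as R^2: all iterated (real) directional derivatives exist everywhere.\<close>
coinductive smooth_fun :: "(complex \<Rightarrow> complex) \<Rightarrow> bool" where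
  "(\<forall>x. f differentiable (at x)) \<Longrightarrow>
   (\<forall>v. smooth_fun (\<lambda>x. frechet_derivative f (at x) v)) \<Longrightarrow> smooth_fun f"

definition test_fun :: "(complex \<Rightarrow> complex) \<Rightarrow> bool" where
  "test_fun f \<longleftrightarrow> smooth_fun f \<and> compact (closure {x. f x \<noteq> 0})"

definition mu_distributed :: "complex measure \<Rightarrow> (nat \<Rightarrow> complex) \<Rightarrow> bool" where
  "mu_distributed \<mu> a \<longleftrightarrow>
     (\<forall>f. test_fun f \<longrightarrow>
        (\<lambda>n. (\<Sum>k=1..n. f (a k)) / of_nat n) \<longlonglongrightarrow> integral\<^sup>L \<mu> f)"

end

theory Submission
  imports Defs
begin


lemma cesaro0:
  fixes p :: "nat \<Rightarrow> real"
  assumes "p \<longlonglongrightarrow> 0"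
  shows "(\<lambda>n. (\<Sum>k=1..n. p k) / real n) \<longlonglongrightarrow> 0"
proof (rule LIMSEQ_I)
  fix r :: real assume r: "r > 0"
  obtain K where K: "\<And>k. k \<ge> K \<Longrightarrow> \<bar>p k\<bar> < r/2"
    using LIMSEQ_D[OF assms, of "r/2"] r by auto
  define C where "C = (\<Sum>k=1..K. \<bar>p k\<bar>)"
  have C0: "C \<ge> 0" unfolding C_def by (intro sum_nonneg) auto
  obtain N :: nat where N: "real N > 2 * C / r" using reals_Archimedean2 by blast
  show "\<exists>no. \<forall>n\<ge>no. norm ((\<Sum>k=1..n. p k) / real n - 0) < r"
  proof (intro exI[of _ "max (Suc K) (Suc N)"] allI impI)
    fix n assume n: "n \<ge> max (Suc K) (Suc N)"
    have nK: "K \<le> n" using n by auto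
    have npos: "real n > 0" using n by auto
    have split: "{1..n} = {1..K} \<union> {Suc K..n}" using nK by auto
    have "\<bar>\<Sum>k=1..n. p k\<bar> \<le> (\<Sum>k=1..n. \<bar>p k\<bar>)" by (rule sum_abs)
    also have "\<dots> = C + (\<Sum>k=Suc K..n. \<bar>p k\<bar>)"
      unfolding C_def split by (subst sum.union_disjoint) auto
    also have "(\<Sum>k=Suc K..n. \<bar>p k\<bar>) \<le> (\<Sum>k=Suc K..n. r/2)"
    proof (intro sum_mono)
      fix k assume "k \<in> {Suc K..n}" hence "k \<ge> K" by auto
      thus "\<bar>p k\<bar> \<le> r/2" using K[of k] by auto
    qed
    also have "\<dots> \<le> real n * (r/2)" using r by simp
    finally have "\<bar>\<Sum>k=1..n. p k\<bar> \<le> C + real n * (r/2)" by simp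
    moreover have "C < real n * (r/2)"
    proof -
      have "real N < real n" using n by auto
      hence "2*C/r < real n" using N by linarith
      thus ?thesis using r by (simp add: field_simps)
    qed
    ultimately have "\<bar>\<Sum>k=1..n. p k\<bar> < real n * r" by linarith
    thus "norm ((\<Sum>k=1..n. p k) / real n - 0) < r"
      using npos by (simp add: field_simps)
  qed
qed

lemma squeeze_lemma:
  fixes u v :: "nat \<Rightarrow> real"
  assumes "\<And>n. u n \<ge> 0" "v \<longlonglongrightarrow> 0"
    and "\<And>j. eventually (\<lambda>n. u n < v n + 1 / real (Suc j)) sequentially"
  shows "u \<longlonglongrightarrow> 0"
proof (rule LIMSEQ_I)
  fix r :: real assume r: "r > 0"
  obtain j :: nat where j: "1 / real (Suc j) < r/2"
    using reals_Archimedean[of "r/2"] r by (auto simp: inverse_eq_divide)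
  have "eventually (\<lambda>n. \<bar>v n\<bar> < r/2) sequentially"
    using tendstoD[OF assms(2), of "r/2"] r by (simp add: dist_real_def)
  with assms(3)[of j] have "eventually (\<lambda>n. norm (u n - 0) < r) sequentially"
    by eventually_elim (use assms(1) j in auto)
  thus "\<exists>no. \<forall>n\<ge>no. norm (u n - 0) < r" by (simp add: eventually_sequentially)
qed

lemma test_fun_props:
  assumes "test_fun f"
  shows "\<exists>B. \<forall>x. cmod (f x) \<le> B"
    and "\<And>e. e > 0 \<Longrightarrow> \<exists>d>0. \<forall>x y. dist x y < d \<longrightarrow> dist (f x) (f y) < e"
proof -
  have sm: "smooth_fun f" and cp: "compact (closure {x. f x \<noteq> 0})"
    using assms unfolding test_fun_def by auto
  have "\<forall>x. f differentiable (at x)" using sm by (cases rule: smooth_fun.cases) auto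
  hence cont: "continuous_on UNIV f"
    by (simp add: continuous_at_imp_continuous_on differentiable_imp_continuous_within)
  define S where "S = closure {x. f x \<noteq> 0}"
  have zero: "f x = 0" if "x \<notin> S" for x using that closure_subset[of "{x. f x \<noteq> 0}"] unfolding S_def by auto
  obtain R where R: "R > 0" "S \<subseteq> cball 0 R"
    using compact_imp_bounded[OF cp] unfolding S_def bounded_pos by (force simp: subset_iff)
  have "bounded (f ` S)"
    using cp cont unfolding S_def
    by (intro compact_imp_bounded compact_continuous_image) (auto intro: continuous_on_subset)
  then obtain B where B: "\<And>y. y \<in> f ` S \<Longrightarrow> norm y \<le> B" by (auto simp: bounded_iff)
  show "\<exists>B. \<forall>x. cmod (f x) \<le> B"
  proof (intro exI allI)
    fix x show "cmod (f x) \<le> max B 0"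
    proof (cases "x \<in> S")
      case True thus ?thesis using B[of "f x"] by auto
    next
      case False thus ?thesis using zero[of x] by auto
    qed
  qed
  fix e :: real assume e: "e > 0"
  have "uniformly_continuous_on (cball 0 (R+1)) f"
    by (intro compact_uniformly_continuous continuous_on_subset[OF cont]) auto
  from this[unfolded uniformly_continuous_on_def, rule_format, OF e]
  obtain d where d0: "d > 0" and d1: "\<forall>x\<in>cball 0 (R+1). \<forall>x'\<in>cball 0 (R+1). dist x' x < d \<longrightarrow> dist (f x') (f x) < e"
    by blast
  have d: "d > 0" "\<And>x y. x \<in> cball 0 (R+1) \<Longrightarrow> y \<in> cball 0 (R+1) \<Longrightarrow> dist y x < d \<Longrightarrow> dist (f y) (f x) < e"
    using d0 d1 by auto
  show "\<exists>d>0. \<forall>x y. dist x y < d \<longrightarrow> dist (f x) (f y) < e"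
  proof (intro exI[of _ "min d 1"] conjI allI impI)
    fix x y :: complex assume xy: "dist x y < min d 1"
    show "dist (f x) (f y) < e"
    proof (cases "x \<in> S \<or> y \<in> S")
      case True
      hence "norm x \<le> R \<or> norm y \<le> R" using R by auto
      moreover have "norm x \<le> norm y + dist x y" "norm y \<le> norm x + dist x y"
        using norm_triangle_ineq[of "x-y" y] norm_triangle_ineq[of "y-x" x]
        by (simp_all add: dist_norm norm_minus_commute)
      ultimately have "x \<in> cball 0 (R+1)" "y \<in> cball 0 (R+1)" using xy by auto
      thus ?thesis using d xy by (auto simp: dist_commute)
    next
      case False thus ?thesis using zero e by auto
    qed
  qed (use d in auto)
qed



lemma perturb_mu_distributed:
  assumes md: "mu_distributed \<mu> a"
    and ind: "\<And>d. d > 0 \<Longrightarrow>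
       (\<lambda>n. (\<Sum>k=1..n. (if d \<le> cmod (b k) then 1 else 0 :: real)) / real n) \<longlonglongrightarrow> 0"
  shows "mu_distributed \<mu> (\<lambda>n. a n + b n)"
  unfolding mu_distributed_def
proof (intro allI impI)
  fix f assume tf: "test_fun f"
  obtain B where B: "\<And>x. cmod (f x) \<le> B" using test_fun_props(1)[OF tf] by blast
  have B0: "B \<ge> 0" using B[of 0] norm_ge_zero order_trans by blast
  let ?A = "\<lambda>n. (\<Sum>k=1..n. f (a k)) / of_nat n"
  let ?C = "\<lambda>n. (\<Sum>k=1..n. f (a k + b k)) / of_nat n"
  have A: "?A \<longlonglongrightarrow> integral\<^sup>L \<mu> f" using md tf unfolding mu_distributed_def by blast
  have D: "(\<lambda>n. ?C n - ?A n) \<longlonglongrightarrow> 0"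
  proof (rule LIMSEQ_I)
    fix r :: real assume r: "r > 0"
    obtain d where d: "d > 0" "\<And>x y. dist x y < d \<Longrightarrow> dist (f x) (f y) < r/2"
      using test_fun_props(2)[OF tf, of "r/2"] r by auto
    define I where "I = (\<lambda>n. (\<Sum>k=1..n. (if d \<le> cmod (b k) then 1 else 0 :: real)) / real n)"
    have "I \<longlonglongrightarrow> 0" unfolding I_def by (rule ind[OF d(1)])
    from tendstoD[OF this, of "r / (4 * (B + 1))"] r B0
    obtain N where N: "\<And>n. n \<ge> N \<Longrightarrow> \<bar>I n\<bar> < r / (4 * (B + 1))"
      by (auto simp: eventually_sequentially dist_real_def)
    show "\<exists>no. \<forall>n\<ge>no. norm (?C n - ?A n - 0) < r"
    proof (intro exI[of _ "max N 1"] allI impI)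
      fix n assume n: "n \<ge> max N 1"
      have npos: "real n > 0" using n by auto
      have tm: "cmod (f (a k + b k) - f (a k)) \<le> r/2 + 2 * B * (if d \<le> cmod (b k) then 1 else 0)" for k
      proof (cases "d \<le> cmod (b k)")
        case True
        have "cmod (f (a k + b k) - f (a k)) \<le> cmod (f (a k + b k)) + cmod (f (a k))"
          by (rule norm_triangle_ineq4)
        also have "\<dots> \<le> 2 * B" using B[of "a k + b k"] B[of "a k"] by simp
        finally show ?thesis using True r by simp
      next
        case False
        hence "dist (a k + b k) (a k) < d" by (simp add: dist_norm)
        hence "dist (f (a k + b k)) (f (a k)) < r/2" by (rule d(2))
        thus ?thesis using False by (simp add: dist_norm)
      qed
      have "?C n - ?A n = (\<Sum>k=1..n. f (a k + b k) - f (a k)) / of_nat n"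
        by (simp add: sum_subtractf diff_divide_distrib)
      hence "norm (?C n - ?A n - 0) = norm (\<Sum>k=1..n. f (a k + b k) - f (a k)) / real n"
        by (simp add: norm_divide)
      also have "\<dots> \<le> (\<Sum>k=1..n. r/2 + 2 * B * (if d \<le> cmod (b k) then 1 else 0)) / real n"
        using npos by (intro divide_right_mono order_trans[OF norm_sum sum_mono] tm) auto
      also have "\<dots> = r/2 + 2 * B * I n"
      proof -
        have e1: "(\<Sum>k=1..n. r/2 + 2 * B * (if d \<le> cmod (b k) then 1 else 0)) =
              real n * (r/2) + 2 * B * (\<Sum>k=1..n. (if d \<le> cmod (b k) then 1 else 0 :: real))"
          by (simp add: sum.distrib sum_distrib_left)
        show ?thesis unfolding e1 I_def using npos by (simp add: add_divide_distrib)
      qed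
      also have "\<dots> < r"
      proof -
        have "I n \<ge> 0" unfolding I_def by (intro divide_nonneg_nonneg sum_nonneg) auto
        hence "I n < r / (4 * (B + 1))" using N[of n] n by auto
        hence "2 * B * I n \<le> 2 * B * (r / (4 * (B + 1)))" using B0 by (intro mult_left_mono) auto
        also have "\<dots> < r/2" using B0 r by (simp add: field_simps)
        finally show ?thesis by simp
      qed
      finally show "norm (?C n - ?A n - 0) < r" .
    qed
  qed
  have "(\<lambda>n. (?C n - ?A n) + ?A n) \<longlonglongrightarrow> 0 + integral\<^sup>L \<mu> f"
    by (intro tendsto_add D A)
  thus "(\<lambda>n. (\<Sum>k=1..n. f (a k + b k)) / of_nat n) \<longlonglongrightarrow> integral\<^sup>L \<mu> f" by simp
qed



lemma (in prob_space) avg_indicator_AE: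
  fixes \<sigma> :: "nat \<Rightarrow> real" and X :: "nat \<Rightarrow> 'a \<Rightarrow> complex" and \<delta> :: real
  assumes \<delta>: "\<delta> > 0"
    and \<sigma>0: "\<And>n. n \<ge> 1 \<Longrightarrow> \<sigma> n \<ge> 0" and \<sigma>lim: "\<sigma> \<longlonglongrightarrow> 0"
    and Xm: "\<And>i. i \<ge> 1 \<Longrightarrow> X i \<in> borel_measurable M"
    and indep: "indep_vars (\<lambda>_. borel) X {1..}"
    and dst: "\<And>i. i \<ge> 1 \<Longrightarrow> distr M borel (X i) = distr M borel (X 1)"
  shows "AE \<omega> in M. (\<lambda>n. (\<Sum>k=1..n. (if \<delta> \<le> \<sigma> k * cmod (X k \<omega>) then 1 else 0 :: real)) / real n)
            \<longlonglongrightarrow> 0"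
proof -
  define g where "g k = (\<lambda>z. if \<delta> \<le> \<sigma> k * cmod z then 1 else 0 :: real)" for k
  define Y where "Y k \<omega> = g k (X k \<omega>)" for k \<omega>
  have gm: "g k \<in> borel_measurable borel" for k unfolding g_def by measurable
  have Ym: "Y k \<in> borel_measurable M" if "k \<ge> 1" for k
    unfolding Y_def by (rule measurable_compose[OF Xm[OF that] gm])
  have indY: "indep_vars (\<lambda>_. borel) Y {1..}"
    unfolding Y_def by (rule indep_vars_compose2[OF indep]) (use gm in auto)
  define p where "p k = expectation (Y k)" for k
  have p_eq: "p k = prob {\<omega>\<in>space M. \<delta> \<le> \<sigma> k * cmod (X 1 \<omega>)}" if k: "k \<ge> 1" for k
  proof -
    have "p k = integral\<^sup>L (distr M borel (X k)) (g k)"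
      unfolding p_def Y_def by (rule integral_distr[symmetric, OF Xm[OF k] gm])
    also have "\<dots> = integral\<^sup>L (distr M borel (X 1)) (g k)" using dst[OF k] by simp
    also have "\<dots> = expectation (\<lambda>\<omega>. g k (X 1 \<omega>))"
      by (rule integral_distr[OF Xm gm]) simp
    also have "\<dots> = expectation (indicator {\<omega>\<in>space M. \<delta> \<le> \<sigma> k * cmod (X 1 \<omega>)})"
      by (intro Bochner_Integration.integral_cong) (auto simp: g_def indicator_def)
    also have "\<dots> = prob {\<omega>\<in>space M. \<delta> \<le> \<sigma> k * cmod (X 1 \<omega>)}"
      by (simp add: integral_indicator Int_absorb2 subset_iff)
    finally show ?thesis .
  qed
  have p_nonneg: "p k \<ge> 0" for k
    unfolding p_def Y_def g_def by (intro integral_nonneg_AE) auto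
  have plim: "p \<longlonglongrightarrow> 0"
  proof -
    define T where "T N = {\<omega>\<in>space M. real N \<le> cmod (X 1 \<omega>)}" for N :: nat
    have X1[measurable]: "X 1 \<in> borel_measurable M" using Xm by simp
    have Tm: "T N \<in> events" for N unfolding T_def by measurable
    have "decseq T" unfolding T_def decseq_def by auto
    moreover have "(\<Inter>i. T i) = {}"
    proof safe
      fix x assume x: "x \<in> (\<Inter>i. T i)"
      obtain N :: nat where N: "cmod (X 1 x) < real N" using reals_Archimedean2 by blast
      from x have "x \<in> T N" by blast
      thus "x \<in> {}" using N unfolding T_def by auto
    qed
    ultimately have Tlim: "(\<lambda>N. prob (T N)) \<longlonglongrightarrow> 0"
      using finite_Lim_measure_decseq[of T] Tm by auto
    show ?thesis
    proof (rule LIMSEQ_I)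
      fix r :: real assume r: "r > 0"
      obtain N where N: "prob (T N) < r"
        using tendstoD[OF Tlim r] by (auto simp: eventually_sequentially)
      have "\<delta> / (real N + 1) > 0" using \<delta> by simp
      from tendstoD[OF \<sigma>lim this] obtain K where K: "\<And>k. k \<ge> K \<Longrightarrow> \<bar>\<sigma> k\<bar> < \<delta> / (real N + 1)"
        by (auto simp: eventually_sequentially dist_real_def)
      show "\<exists>no. \<forall>n\<ge>no. norm (p n - 0) < r"
      proof (intro exI[of _ "max K 1"] allI impI)
        fix k assume k: "k \<ge> max K 1"
        have sk: "\<sigma> k < \<delta> / (real N + 1)" "\<sigma> k \<ge> 0" using K[of k] \<sigma>0[of k] k by auto
        have sub: "{\<omega>\<in>space M. \<delta> \<le> \<sigma> k * cmod (X 1 \<omega>)} \<subseteq> T N"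
        proof safe
          fix \<omega> assume \<omega>: "\<omega> \<in> space M" "\<delta> \<le> \<sigma> k * cmod (X 1 \<omega>)"
          show "\<omega> \<in> T N"
          proof (rule ccontr)
            assume "\<omega> \<notin> T N"
            hence lt: "cmod (X 1 \<omega>) < real N" using \<omega> unfolding T_def by auto
            have "\<sigma> k * cmod (X 1 \<omega>) \<le> \<sigma> k * real N"
              using lt sk by (intro mult_left_mono) auto
            also have "\<dots> \<le> \<delta> / (real N + 1) * real N"
              using sk by (intro mult_right_mono) auto
            also have "\<dots> < \<delta>" using \<delta> by (simp add: field_simps)
            finally show False using \<omega> by simp
          qed
        qed
        have "p k = prob {\<omega>\<in>space M. \<delta> \<le> \<sigma> k * cmod (X 1 \<omega>)}"
          using k by (intro p_eq) auto
        also have "\<dots> \<le> prob (T N)" by (rule finite_measure_mono[OF sub Tm])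
        finally have "p k \<le> prob (T N)" .
        thus "norm (p k - 0) < r" using N p_nonneg[of k] by simp
      qed
    qed
  qed
  define A where "A \<eta> n = {\<omega>\<in>space M. (\<Sum>i\<in>{1..n}. p i) + real n * \<eta> \<le> (\<Sum>i\<in>{1..n}. Y i \<omega>)}"
    for \<eta> :: real and n :: nat
  have Am: "A \<eta> n \<in> events" for \<eta> n
  proof -
    have [measurable]: "(\<lambda>\<omega>. \<Sum>i\<in>{1..n}. Y i \<omega>) \<in> borel_measurable M"
      by (intro borel_measurable_sum) (use Ym in auto)
    show ?thesis unfolding A_def by measurable
  qed
  have Abound: "prob (A \<eta> n) \<le> exp (- (2 * \<eta>\<^sup>2) * real n)" if \<eta>: "\<eta> > 0" for \<eta> n
  proof (cases "n = 0")
    case True thus ?thesis by simp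
  next
    case False
    have H: "Hoeffding_ineq M {1..n} Y (\<lambda>_. 0) (\<lambda>_. 1)"
      unfolding Hoeffding_ineq_def indep_interval_bounded_random_variables_def
        indep_interval_bounded_random_variables_axioms_def
      using prob_space_axioms indep_vars_subset[OF indY, of "{1..n}"]
      by (auto simp: Y_def g_def)
    have pos: "(0::real) < (\<Sum>i\<in>{1..n}. ((\<lambda>_. 1::real) i - (\<lambda>_. 0) i)\<^sup>2)" using False by simp
    from Hoeffding_ineq.Hoeffding_ineq_ge[OF H, of "real n * \<eta>", OF _ pos] \<eta>
    have "prob (A \<eta> n) \<le> exp (- 2 * (real n * \<eta>)\<^sup>2 / real n)"
      unfolding A_def p_def by simp
    also have "\<dots> = exp (- (2 * \<eta>\<^sup>2) * real n)"
      using False by (simp add: power2_eq_square field_simps)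
    finally show ?thesis .
  qed
  have AE_j: "AE \<omega> in M. eventually (\<lambda>n. \<omega> \<in> space M - A (1 / real (Suc j)) n) sequentially" for j
  proof (rule borel_cantelli_AE1)
    show "A (1 / real (Suc j)) n \<in> events" for n by (rule Am)
    show "emeasure M (A (1 / real (Suc j)) n) < \<infinity>" for n by (simp add: less_top[symmetric])
    define c where "c = 2 * (1 / real (Suc j))\<^sup>2"
    have c: "c > 0" unfolding c_def by simp
    have "summable (\<lambda>n. exp (- c) ^ n)" using c by (intro summable_geometric) simp
    hence s: "summable (\<lambda>n. exp (- c * real n))" by (simp add: exp_of_nat_mult[symmetric] mult.commute)
    show "summable (\<lambda>n. measure M (A (1 / real (Suc j)) n))"
    proof (rule summable_comparison_test[OF _ s])
      have "prob (A (1 / real (Suc j)) n) \<le> exp (- c * real n)" for n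
        using Abound[of "1 / real (Suc j)" n] unfolding c_def by simp
      thus "\<exists>N. \<forall>n\<ge>N. norm (prob (A (1 / real (Suc j)) n)) \<le> exp (- c * real n)" by auto
    qed
  qed
  have "AE \<omega> in M. \<forall>j. eventually (\<lambda>n. \<omega> \<in> space M - A (1 / real (Suc j)) n) sequentially"
    using AE_j by (simp add: AE_all_countable)
  thus ?thesis
  proof eventually_elim
    case (elim \<omega>)
    show ?case
    proof (rule squeeze_lemma)
      show "\<And>n. (\<Sum>k=1..n. (if \<delta> \<le> \<sigma> k * cmod (X k \<omega>) then 1 else 0 :: real)) / real n \<ge> 0"
        by (intro divide_nonneg_nonneg sum_nonneg) auto
      show "(\<lambda>n. (\<Sum>k=1..n. p k) / real n) \<longlonglongrightarrow> 0" by (rule cesaro0[OF plim])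
      fix j
      show "eventually (\<lambda>n. (\<Sum>k=1..n. (if \<delta> \<le> \<sigma> k * cmod (X k \<omega>) then 1 else 0 :: real)) / real n
            < (\<Sum>k=1..n. p k) / real n + 1 / real (Suc j)) sequentially"
        using elim[rule_format, of j] eventually_gt_at_top[of 0]
      proof eventually_elim
        case (elim n)
        hence "(\<Sum>k=1..n. Y k \<omega>) < (\<Sum>k=1..n. p k) + real n * (1 / real (Suc j))"
          unfolding A_def by auto
        hence "(\<Sum>k=1..n. Y k \<omega>) / real n < ((\<Sum>k=1..n. p k) + real n * (1 / real (Suc j))) / real n"
          using elim by (intro divide_strict_right_mono) auto
        thus ?case using elim by (simp add: Y_def g_def add_divide_distrib)
      qed
    qed
  qed
qed


theorem mainTheorem8:
  fixes \<mu> :: "complex measure" and a :: "nat \<Rightarrow> complex" and \<sigma> :: "nat \<Rightarrow> real"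
    and M :: "'w measure" and X :: "nat \<Rightarrow> 'w \<Rightarrow> complex"
  assumes "prob_space \<mu>" and "sets \<mu> = sets borel"
    and "mu_distributed \<mu> a"
    and "\<And>n. n \<ge> 1 \<Longrightarrow> \<sigma> n \<ge> 0"
    and "\<And>n. n \<ge> 1 \<Longrightarrow> \<sigma> (Suc n) \<le> \<sigma> n"
    and "\<sigma> \<longlonglongrightarrow> 0"
    and "prob_space M"
    and "\<And>i. i \<ge> 1 \<Longrightarrow> X i \<in> borel_measurable M"
    and "prob_space.indep_vars M (\<lambda>_. borel) X {1..}"
    and "\<And>i. i \<ge> 1 \<Longrightarrow> distr M borel (X i) = distr M borel (X 1)"
  shows "AE \<omega> in M. mu_distributed \<mu> (\<lambda>n. a n + of_real (\<sigma> n) * X n \<omega>)"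
proof -
  interpret M: prob_space M by fact
  have "AE \<omega> in M. \<forall>j. (\<lambda>n. (\<Sum>k=1..n. (if 1 / real (Suc j) \<le> \<sigma> k * cmod (X k \<omega>) then 1 else 0 :: real)) / real n)
            \<longlonglongrightarrow> 0"
    unfolding AE_all_countable
    using M.avg_indicator_AE[OF _ assms(4) assms(6) assms(8) assms(9) assms(10)] by auto
  then show ?thesis
  proof eventually_elim
    case (elim \<omega>)
    show ?case
    proof (rule perturb_mu_distributed[OF assms(3)])
      fix d :: real assume d: "d > 0"
      obtain j :: nat where j: "1 / real (Suc j) < d"
        using reals_Archimedean[OF d] by (auto simp: inverse_eq_divide)
      have lim: "(\<lambda>n. (\<Sum>k=1..n. (if 1 / real (Suc j) \<le> \<sigma> k * cmod (X k \<omega>) then 1 else 0 :: real)) / real n)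
            \<longlonglongrightarrow> 0" using elim by blast
      show "(\<lambda>n. (\<Sum>k=1..n. (if d \<le> cmod (of_real (\<sigma> k) * X k \<omega>) then 1 else 0 :: real)) / real n) \<longlonglongrightarrow> 0"
      proof (rule tendsto_sandwich[OF _ _ tendsto_const lim])
        show "eventually (\<lambda>n. 0 \<le> (\<Sum>k=1..n. (if d \<le> cmod (of_real (\<sigma> k) * X k \<omega>) then 1 else 0 :: real)) / real n) sequentially"
          by (intro always_eventually allI divide_nonneg_nonneg sum_nonneg) auto
        have "(\<Sum>k=1..n. (if d \<le> cmod (of_real (\<sigma> k) * X k \<omega>) then 1 else 0 :: real)) / real n
              \<le> (\<Sum>k=1..n. (if 1 / real (Suc j) \<le> \<sigma> k * cmod (X k \<omega>) then 1 else 0 :: real)) / real n" for n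
        proof (intro divide_right_mono sum_mono)
          fix k assume k: "k \<in> {1..n}"
          have "cmod (of_real (\<sigma> k) * X k \<omega>) = \<sigma> k * cmod (X k \<omega>)"
            using assms(4)[of k] k by (simp add: norm_mult)
          thus "(if d \<le> cmod (of_real (\<sigma> k) * X k \<omega>) then 1 else 0 :: real)
                \<le> (if 1 / real (Suc j) \<le> \<sigma> k * cmod (X k \<omega>) then 1 else 0)"
            using j by auto
        qed auto
        thus "eventually (\<lambda>n. (\<Sum>k=1..n. (if d \<le> cmod (of_real (\<sigma> k) * X k \<omega>) then 1 else 0 :: real)) / real n
              \<le> (\<Sum>k=1..n. (if 1 / real (Suc j) \<le> \<sigma> k * cmod (X k \<omega>) then 1 else 0 :: real)) / real n) sequentially"
          by (intro always_eventually allI)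
      qed
    qed
  qed
qed

end
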